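(* Let $X$, $\mu$ be as in the context, under the standing assumptions. For $s\in\mathbb R$ and $r>0$ let $S_r(s)=\sup\sum_i\mu(B(x_i,r))^s$, where the supremum is over all families of pairwise disjoint closed balls $B(x_i,r)$ of radius $r$ with centers $x_i\in X$. Then for every $s\in\mathbb R$, $$\underline\tau_\mu(s):=\liminf_{r\to0}\frac{\log S_r(s)}{\log r}=\min\{\beta_1(s),\beta_2(s)\},\qquad \overline\tau_\mu(s):=\limsup_{r\to0}\frac{\log S_r(s)}{\log r}=\max\{\beta_1(s),\beta_2(s)\}.$$
   Context: Let $\mathcal A=\{0,1\}$. Fix real numbers $A>B>2$, real numbers $p,q$ with $0<p,q\le 1/2$, and a strictly increasing sequence of integers $\mathcal N=(N_i)_{i\ge 0}$ with $N_0=0$. For $n\ge 1$, call $n$ of type A if $N_{2i}<n\le N_{2i+1}$ for some $i\ge 0$, and of type B if $N_{2i+1}<n\le N_{2i+2}$ for some $i\ge0$; put $(r_n,\rho_n)=(A,p)$ if $n$ is of type A and $(r_n,\rho_n)=(B,q)$ if $n$ is of type B. Define closed intervals $I_w$, $w\in\mathcal A^n$, recursively: $I_\emptyset=[0,1]$, and if $w\in\mathcal A^{n-1}$ and $I_w=[x_w,x_w+\ell]$ then $I_{w0}=[x_w,x_w+\ell/r_n]$ and $I_{w1}=[x_w+\ell-\ell/r_n,\,x_w+\ell]$. Let $X=\bigcap_{n\ge1}\bigcup_{w\in\mathcal A^n}I_w$. Let $\mu$ be the unique Borel probability measure on $X$ with $\mu(I_\emptyset)=1$ and, for $w\in\mathcal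 A^{n-1}$, $\mu(I_{w0})=\rho_n\mu(I_w)$, $\mu(I_{w1})=(1-\rho_n)\mu(I_w)$. Standing assumptions: $\lim_{i\to\infty}N_{i+1}/N_i=\infty$ and $-\frac{\log p}{\log A}<-\frac{\log(1-q)}{\log B}$. Define $\beta_1(s)=-\frac{\log(p^s+(1-p)^s)}{\log A}$ and $\beta_2(s)=-\frac{\log(q^s+(1-q)^s)}{\log B}$. *)

theory Defs
  imports "HOL-Probability.Probability"
begin

text \<open>Words over {0,1} are bool lists; False = letter 0, True = letter 1.
Position n (1-based) of a word uses the data (r n, rho n).\<close>

definition typeA :: "(nat \<Rightarrow> nat) \<Rightarrow> nat \<Rightarrow> bool" where
  "typeA N n \<longleftrightarrow> (\<exists>i. N (2*i) < n \<and> n \<le> N (2*i+1))"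

definition rr :: "real \<Rightarrow> real \<Rightarrow> (nat \<Rightarrow> nat) \<Rightarrow> nat \<Rightarrow> real" where
  "rr A B N n = (if typeA N n then A else B)"

definition rho :: "real \<Rightarrow> real \<Rightarrow> (nat \<Rightarrow> nat) \<Rightarrow> nat \<Rightarrow> real" where
  "rho p q N n = (if typeA N n then p else q)"

definition ell :: "real \<Rightarrow> real \<Rightarrow> (nat \<Rightarrow> nat) \<Rightarrow> nat \<Rightarrow> real" where
  "ell A B N n = (\<Prod>k\<in>{1..n}. 1 / rr A B N k)"

text \<open>Left endpoint, by recursion on the reversed word: the word v followed by letter b.\<close>
fun xrev :: "real \<Rightarrow> real \<Rightarrow> (nat \<Rightarrow> nat) \<Rightarrow> bool list \<Rightarrow> real" where
  "xrev A B N [] = 0"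
| "xrev A B N (b # v) = xrev A B N v +
     (if b then ell A B N (length v) - ell A B N (Suc (length v)) else 0)"

definition Iw :: "real \<Rightarrow> real \<Rightarrow> (nat \<Rightarrow> nat) \<Rightarrow> bool list \<Rightarrow> real set" where
  "Iw A B N w = {xrev A B N (rev w) .. xrev A B N (rev w) + ell A B N (length w)}"

definition Xset :: "real \<Rightarrow> real \<Rightarrow> (nat \<Rightarrow> nat) \<Rightarrow> real set" where
  "Xset A B N = (\<Inter>n\<in>{1..}. \<Union>w\<in>{w. length w = n}. Iw A B N w)"

definition weight :: "real \<Rightarrow> real \<Rightarrow> (nat \<Rightarrow> nat) \<Rightarrow> bool list \<Rightarrow> real" where
  "weight p q N w = (\<Prod>k<length w. if w ! k then 1 - rho p q N (Suc k) else rho p q N (Suc k))"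

definition Sr :: "real measure \<Rightarrow> real set \<Rightarrow> real \<Rightarrow> real \<Rightarrow> real" where
  "Sr M X s r = Sup {(\<Sum>x\<in>C. measure M (cball x r) powr s) | C.
       finite C \<and> C \<subseteq> X \<and> (\<forall>x\<in>C. \<forall>y\<in>C. x \<noteq> y \<longrightarrow> cball x r \<inter> cball y r = {})}"

definition beta :: "real \<Rightarrow> real \<Rightarrow> real \<Rightarrow> real" where
  "beta A p s = - ln (p powr s + (1 - p) powr s) / ln A"

end

theory Submission imports Defs begin

locale moran =
  fixes A B p q :: real and N :: "nat \<Rightarrow> nat"
  assumes B2: "2 < B" and BA: "B < A" and p0: "0 < p" and p2: "p \<le> 1/2"
    and q0: "0 < q" and q2: "q \<le> 1/2"
begin

abbreviation "L \<equiv> ell A B N"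
abbreviation "R \<equiv> rr A B N"
abbreviation "rh \<equiv> rho p q N"
abbreviation "xl w \<equiv> xrev A B N (rev w)"
abbreviation "I \<equiv> Iw A B N"
abbreviation "X \<equiv> Xset A B N"
abbreviation "wt \<equiv> weight p q N"

lemma rr_ge: "B \<le> R k" using BA by (simp add: rr_def)
lemma rr_le: "R k \<le> A" using BA by (simp add: rr_def)
lemma rr_pos: "0 < R k" using rr_ge[of k] B2 by linarith
lemma rho_pos: "0 < rh k" using p0 q0 by (simp add: rho_def)
lemma rho_half: "rh k \<le> 1/2" using p2 q2 by (simp add: rho_def)

lemma ell_0[simp]: "L 0 = 1" by (simp add: ell_def)
lemma ell_Suc: "L (Suc n) = L n / R (Suc n)"
  unfolding ell_def by (simp add: prod.cl_ivl_Suc)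
lemma ell_pos: "0 < L n"
  by (induction n) (auto simp: ell_Suc rr_pos)
lemma ell_Suc_le: "L (Suc n) \<le> L n / B"
  using ell_pos[of n] rr_ge[of "Suc n"] B2 by (simp add: ell_Suc frac_le)
lemma ell_Suc_ge: "L n / A \<le> L (Suc n)"
  using ell_pos[of n] rr_le[of "Suc n"] rr_pos[of "Suc n"] by (simp add: ell_Suc frac_le)
lemma ell_Suc_le': "L (Suc n) \<le> L n"
  using ell_pos[of n] rr_ge[of "Suc n"] B2 by (simp add: ell_Suc divide_le_eq)
lemma ell_mono: "m \<le> n \<Longrightarrow> L n \<le> L m"
proof (induction n rule: dec_induct)
  case base then show ?case by simp
next
  case (step n) then show ?case using ell_Suc_le'[of n] by linarith
qed
lemma ell_add: "L (m + j) \<le> L m / B ^ j"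
proof (induction j)
  case 0 then show ?case by simp
next
  case (Suc j)
  have "L (m + Suc j) \<le> L (m+j) / B" using ell_Suc_le[of "m+j"] by simp
  also have "\<dots> \<le> L m / B ^ j / B" using Suc B2 by (intro divide_right_mono) auto
  finally show ?case by (simp add: field_simps)
qed
lemma ln_ell: "ln (L n) = - (\<Sum>k\<in>{1..n}. ln (R k))"
proof (induction n)
  case 0 then show ?case by simp
next
  case (Suc n)
  have "ln (L (Suc n)) = ln (L n) - ln (R (Suc n))"
    using ell_pos[of n] rr_pos[of "Suc n"] by (simp add: ell_Suc ln_div)
  then show ?case using Suc by (simp add: sum.cl_ivl_Suc)
qed

lemma xl_snoc: "xl (w @ [b]) = xl w + (if b then L (length w) - L (Suc (length w)) else 0)"
  by simp
lemma I_def': "I w = {xl w .. xl w + L (length w)}" by (simp add: Iw_def)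

lemma I_snoc: "I (w @ [b]) \<subseteq> I w"
  using ell_Suc_le'[of "length w"] ell_pos[of "Suc (length w)"] by (auto simp: I_def')

lemma I_append: "I (w @ v) \<subseteq> I w"
proof (induction v rule: rev_induct)
  case Nil then show ?case by simp
next
  case (snoc b v) then show ?case using I_snoc[of "w @ v" b] by auto
qed

lemma I_diam: "x \<in> I w \<Longrightarrow> y \<in> I w \<Longrightarrow> \<bar>x - y\<bar> \<le> L (length w)"
  by (auto simp: I_def')

lemma c_pos: "0 < 1 - 2/B" using B2 by (simp add: field_simps)

lemma gap:
  assumes "a \<noteq> b" "x \<in> I (u @ [a])" "y \<in> I (u @ [b])"
  shows "(1 - 2/B) * L (length u) \<le> \<bar>x - y\<bar>"
proof -
  let ?n = "length u"
  have h: "2 * L (Suc ?n) \<le> 2 * L ?n / B" using ell_Suc_le[of ?n] by simp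
  have e: "(1 - 2/B) * L ?n = L ?n - 2 * L ?n / B" by (simp add: algebra_simps)
  show ?thesis
  proof (cases a)
    case True
    then have "\<not> b" using assms by simp
    then show ?thesis using assms True h e by (auto simp: I_def')
  next
    case False
    then have "b" using assms by simp
    then show ?thesis using assms False h e by (auto simp: I_def')
  qed
qed

lemma sep:
  "length w = Suc n \<Longrightarrow> length v = Suc n \<Longrightarrow> w \<noteq> v \<Longrightarrow> x \<in> I w \<Longrightarrow> y \<in> I v
   \<Longrightarrow> (1 - 2/B) * L n \<le> \<bar>x - y\<bar>"
proof (induction n arbitrary: w v x y)
  case (0 w v x y)
  obtain a where a: "w = [a]" using 0 by (metis Suc_length_conv length_0_conv)
  obtain b where b: "v = [b]" using 0 by (metis Suc_length_conv length_0_conv)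
  show ?case using gap[of a b x "[]" y] 0 a b by simp
next
  case (Suc n w v x y)
  obtain w0 a where a: "w = w0 @ [a]" using Suc.prems(1)
    by (metis length_Suc_conv_rev)
  obtain v0 b where b: "v = v0 @ [b]" using Suc.prems(2)
    by (metis length_Suc_conv_rev)
  have lw: "length w0 = Suc n" "length v0 = Suc n" using a b Suc.prems by auto
  show ?case
  proof (cases "w0 = v0")
    case True
    then show ?thesis using gap[of a b x w0 y] Suc.prems a b lw by auto
  next
    case False
    have "x \<in> I w0" "y \<in> I v0" using Suc.prems a b I_snoc by auto
    then have "(1 - 2/B) * L n \<le> \<bar>x - y\<bar>" using Suc.IH[OF lw False] by simp
    moreover have "(1 - 2/B) * L (Suc n) \<le> (1 - 2/B) * L n"
      using ell_Suc_le'[of n] c_pos by (intro mult_left_mono) auto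
    ultimately show ?thesis by linarith
  qed
qed

lemma X_cover: assumes "x \<in> X" shows "\<exists>w. length w = n \<and> x \<in> I w"
proof (cases "n = 0")
  case False then show ?thesis using assms by (auto simp: Xset_def)
next
  case True
  obtain w where "length w = 1" "x \<in> I w" using assms by (auto simp: Xset_def)
  then obtain a where "w = [] @ [a]" by (metis One_nat_def Suc_length_conv length_0_conv append_Nil)
  then have "x \<in> I []" using I_snoc \<open>x \<in> I w\<close> by blast
  then show ?thesis using True by auto
qed

lemma xl_rep: "xl (w @ replicate k False) = xl w"
proof (induction k)
  case 0 then show ?case by simp
next
  case (Suc k)
  have "w @ replicate (Suc k) False = (w @ replicate k False) @ [False]"
    by (simp add: replicate_append_same[symmetric])
  then show ?case using Suc by (simp only: xl_snoc) simp
qed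

lemma xl_in_I: "xl w \<in> I w" using ell_pos[of "length w"] by (simp add: I_def')

lemma xl_in_X: "xl w \<in> X"
proof -
  have "\<exists>u. length u = m \<and> xl w \<in> I u" for m
  proof (cases "m \<le> length w")
    case True
    have "I w \<subseteq> I (take m w)" using I_append[of "take m w" "drop m w"] by simp
    then show ?thesis using True xl_in_I[of w] by (intro exI[of _ "take m w"]) auto
  next
    case False
    let ?u = "w @ replicate (m - length w) False"
    have "xl w \<in> I ?u" using xl_in_I[of ?u] by (simp only: xl_rep)
    then show ?thesis using False by (intro exI[of _ ?u]) auto
  qed
  then show ?thesis by (auto simp: Xset_def)
qed

lemma finite_words: "finite {w::bool list. length w = n}"
  using finite_lists_length_eq[of "UNIV::bool set" n] by simp

lemma closed_X: "closed X"
  unfolding Xset_def Iw_def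
  by (intro closed_INT ballI closed_UN) (auto intro: finite_words)

definition fac :: "nat \<Rightarrow> bool \<Rightarrow> real" where
  "fac k b = (if b then 1 - rh k else rh k)"

lemma wt_snoc: "wt (w @ [b]) = wt w * fac (Suc (length w)) b"
proof -
  have "(\<Prod>k<length w. if (w @ [b]) ! k then 1 - rh (Suc k) else rh (Suc k))
      = (\<Prod>k<length w. if w ! k then 1 - rh (Suc k) else rh (Suc k))"
    by (rule prod.cong) (auto simp: nth_append)
  then show ?thesis unfolding weight_def fac_def by (simp add: nth_append)
qed

lemma wt_Nil[simp]: "wt [] = 1" by (simp add: weight_def)

definition "kap = min p q"
lemma kap_pos: "0 < kap" using p0 q0 by (simp add: kap_def)
lemma kap_le: "kap \<le> 1/2" using p2 q2 by (simp add: kap_def)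

lemma fac_bounds: "kap \<le> fac k b" "fac k b \<le> 1" "0 < fac k b"
  using rho_pos[of k] rho_half[of k] p0 q0 unfolding fac_def kap_def rho_def
  by (auto split: if_splits)

lemma wt_pos: "0 < wt w"
  by (induction w rule: rev_induct) (auto simp: wt_snoc fac_bounds)

lemma wt_append_le: "wt (w @ v) \<le> wt w"
proof (induction v rule: rev_induct)
  case Nil then show ?case by simp
next
  case (snoc b v)
  have "wt ((w @ v) @ [b]) \<le> wt (w @ v)"
    using wt_pos[of "w@v"] fac_bounds(2)[of "Suc (length (w @ v))" b]
    by (simp only: wt_snoc) (simp add: mult_left_le)
  then show ?case using snoc by simp
qed

lemma wt_append_ge: "kap ^ length v * wt w \<le> wt (w @ v)"
proof (induction v rule: rev_induct)
  case Nil then show ?case by simp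
next
  case (snoc b v)
  have "kap * wt (w @ v) \<le> wt ((w @ v) @ [b])"
    using wt_pos[of "w@v"] fac_bounds(1)[of "Suc (length (w @ v))" b]
    by (simp only: wt_snoc) (simp add: mult.commute mult_left_mono)
  moreover have "kap * (kap ^ length v * wt w) \<le> kap * wt (w @ v)"
    using snoc kap_pos by (intro mult_left_mono) auto
  ultimately show ?case by (simp add: algebra_simps)
qed

definition Z :: "real \<Rightarrow> nat \<Rightarrow> real" where
  "Z s n = (\<Sum>w\<in>{w. length w = n}. wt w powr s)"

definition fk :: "real \<Rightarrow> nat \<Rightarrow> real" where
  "fk s k = rh k powr s + (1 - rh k) powr s"

lemma fk_pos: "0 < fk s k"
  using rho_pos[of k] by (simp add: fk_def add_pos_nonneg)

lemma words_Suc: "{w::bool list. length w = Suc n} = (\<lambda>(w,b). w @ [b]) ` ({w. length w = n} \<times> UNIV)"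
proof (safe)
  fix w :: "bool list" assume "length w = Suc n"
  then obtain w0 a where "w = w0 @ [a]" by (metis length_Suc_conv_rev)
  then show "w \<in> (\<lambda>(w,b). w @ [b]) ` ({w. length w = n} \<times> UNIV)"
    using \<open>length w = Suc n\<close> by (auto intro!: image_eqI[of _ _ "(w0, a)"])
qed auto

lemma Z_Suc: "Z s (Suc n) = Z s n * fk s (Suc n)"
proof -
  have inj: "inj_on (\<lambda>(w,b). w @ [b]) ({w::bool list. length w = n} \<times> UNIV)"
    by (auto simp: inj_on_def)
  have "Z s (Suc n) = (\<Sum>(w,b)\<in>{w. length w = n} \<times> UNIV. wt (w @ [b]) powr s)"
    unfolding Z_def words_Suc by (subst sum.reindex[OF inj]) (simp add: case_prod_beta)
  also have "\<dots> = (\<Sum>w\<in>{w. length w = n}. \<Sum>b\<in>UNIV. wt (w @ [b]) powr s)"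
    by (rule sum.cartesian_product[symmetric])
  also have "\<dots> = (\<Sum>w\<in>{w. length w = n}. wt w powr s * fk s (Suc n))"
  proof (rule sum.cong)
    fix w :: "bool list" assume "w \<in> {w. length w = n}"
    then have l: "length w = n" by simp
    have "(\<Sum>b\<in>UNIV. wt (w @ [b]) powr s) = (\<Sum>b\<in>UNIV. wt w powr s * fac (Suc n) b powr s)"
      using wt_pos[of w] fac_bounds(3) l by (simp add: wt_snoc powr_mult)
    also have "\<dots> = wt w powr s * fk s (Suc n)"
      by (simp add: UNIV_bool fk_def fac_def algebra_simps)
    finally show "(\<Sum>b\<in>UNIV. wt (w @ [b]) powr s) = wt w powr s * fk s (Suc n)" .
  qed simp
  also have "\<dots> = Z s n * fk s (Suc n)" by (simp add: Z_def sum_distrib_right)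
  finally show ?thesis .
qed

lemma Z_0: "Z s 0 = 1" by (simp add: Z_def)

lemma Z_pos: "0 < Z s n"
  by (induction n) (auto simp: Z_0 Z_Suc fk_pos)

lemma ln_Z: "ln (Z s n) = (\<Sum>k\<in>{1..n}. ln (fk s k))"
proof (induction n)
  case 0 then show ?case by (simp add: Z_0)
next
  case (Suc n) then show ?case
    using Z_pos[of s n] fk_pos[of s "Suc n"] by (simp add: Z_Suc ln_mult sum.cl_ivl_Suc)
qed

end

locale moranM = moran +
  fixes M :: "real measure"
  assumes PS: "prob_space M" and SM: "sets M = sets borel"
    and null: "emeasure M (UNIV - Xset A B N) = 0"
    and mI: "\<And>w. emeasure M (Iw A B N w) = ennreal (weight p q N w)"
begin

interpretation P: prob_space M by (rule PS)

lemma sets_closed: "closed S \<Longrightarrow> S \<in> sets M" by (simp add: SM borel_closed)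
lemma sets_open: "open S \<Longrightarrow> S \<in> sets M" by (simp add: SM borel_open)

lemma meas_I: "measure M (I w) = wt w"
  using mI[of w] wt_pos[of w] by (simp add: measure_def)

lemma meas_null: "measure M (UNIV - X) = 0"
  using null by (simp add: measure_def)

lemma ball_ge: assumes "x \<in> I w" "L (length w) \<le> r" shows "wt w \<le> measure M (cball x r)"
proof -
  have "I w \<subseteq> cball x r" using assms by (auto simp: I_def' dist_real_def)
  then have "measure M (I w) \<le> measure M (cball x r)"
    by (intro P.finite_measure_mono sets_closed) auto
  then show ?thesis by (simp add: meas_I)
qed

lemma ball_le: assumes "x \<in> I u" "length u = Suc m" "r < (1 - 2/B) * L m"
  shows "measure M (cball x r) \<le> wt u"
proof -
  have "cball x r \<subseteq> I u \<union> (UNIV - X)"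
  proof
    fix y assume y: "y \<in> cball x r"
    show "y \<in> I u \<union> (UNIV - X)"
    proof (cases "y \<in> X")
      case True
      then obtain v where v: "length v = Suc m" "y \<in> I v" using X_cover by blast
      have "v = u"
      proof (rule ccontr)
        assume "v \<noteq> u"
        then have "(1 - 2/B) * L m \<le> \<bar>x - y\<bar>" using sep[of u m v x y] assms v by auto
        then show False using y assms(3) by (auto simp: dist_real_def)
      qed
      then show ?thesis using v by auto
    qed auto
  qed
  then have "measure M (cball x r) \<le> measure M (I u \<union> (UNIV - X))"
    by (intro P.finite_measure_mono sets.Un sets_closed sets_open) (auto simp: Iw_def closed_X)
  also have "\<dots> \<le> measure M (I u) + measure M (UNIV - X)"
    by (intro measure_Un_le sets_closed sets_open) (auto simp: Iw_def closed_X)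
  finally show ?thesis by (simp add: meas_I meas_null)
qed

lemma sandwich:
  fixes a x T s :: real
  assumes "0 < a" "1 \<le> T" "a \<le> x * T" "x \<le> a * T"
  shows "T powr (-\<bar>s\<bar>) * a powr s \<le> x powr s \<and> x powr s \<le> T powr \<bar>s\<bar> * a powr s"
proof -
  have T0: "0 < T" using assms by simp
  have "0 < x * T" using assms by linarith
  then have x0: "0 < x" using T0 by (simp add: zero_less_mult_iff)
  have d: "\<bar>ln x - ln a\<bar> \<le> ln T"
  proof -
    have "ln a \<le> ln (x * T)" using assms x0 T0 by simp
    moreover have "ln x \<le> ln (a * T)" using assms x0 T0 by simp
    ultimately have "ln a \<le> ln x + ln T" "ln x \<le> ln a + ln T" using x0 T0 assms(1) by (simp_all add: ln_mult)
    then show ?thesis by linarith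
  qed
  have "\<bar>s * ln x - s * ln a\<bar> \<le> \<bar>s\<bar> * ln T"
    using d by (simp add: abs_mult right_diff_distrib[symmetric] mult_left_mono)
  then have h: "s * ln a - \<bar>s\<bar> * ln T \<le> s * ln x" "s * ln x \<le> s * ln a + \<bar>s\<bar> * ln T"
    by linarith+
  have e1: "x powr s = exp (s * ln x)" using x0 by (simp add: powr_def)
  have e2: "T powr (-\<bar>s\<bar>) * a powr s = exp (s * ln a - \<bar>s\<bar> * ln T)"
    using T0 assms(1) by (simp add: powr_def exp_diff exp_minus field_simps)
  have e3: "T powr \<bar>s\<bar> * a powr s = exp (s * ln a + \<bar>s\<bar> * ln T)"
    using T0 assms(1) by (simp add: powr_def exp_add field_simps)
  show ?thesis unfolding e1 e2 e3 using h by simp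
qed

definition "TT K = inverse (kap ^ K)"
lemma TT_ge1: "1 \<le> TT K"
  unfolding TT_def using kap_pos kap_le
  by (simp add: one_le_inverse_iff power_le_one)

lemma key_gap:
  assumes K: "2 / (1 - 2/B) \<le> B ^ K" and m: "1 \<le> m" and r: "0 < r" "r < L (m+K-1)"
  shows "2 * r < (1 - 2/B) * L (m - 1)"
proof -
  have BK: "0 < B ^ K" using B2 by simp
  have "L (m - 1 + K) \<le> L (m - 1) / B ^ K" by (rule ell_add)
  moreover have "m - 1 + K = m + K - 1" using m by simp
  ultimately have "r < L (m - 1) / B ^ K" using r by simp
  then have a: "r * B ^ K < L (m - 1)" using BK by (simp add: pos_less_divide_eq)
  have "2 \<le> (1 - 2/B) * B ^ K" using K c_pos by (simp add: pos_divide_le_eq mult.commute)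
  then have "2 * r \<le> (1 - 2/B) * B ^ K * r" using r by (intro mult_right_mono) auto
  also have "\<dots> < (1 - 2/B) * L (m - 1)" using a c_pos by (simp add: mult.commute mult.left_commute)
  finally show ?thesis .
qed

lemma wt_u_le: assumes "length v = K" shows "wt u \<le> wt (u @ v) * TT K"
proof -
  have "kap ^ K * wt u \<le> wt (u @ v)" using wt_append_ge[of v u] assms by simp
  then show ?thesis using kap_pos unfolding TT_def
    by (simp add: field_simps)
qed

lemma admissible_sum_le:
  assumes K: "2 / (1 - 2/B) \<le> B ^ K" and m: "1 \<le> m" and r: "L (m+K) \<le> r" "r < L (m+K-1)"
    and C: "finite C" "C \<subseteq> X" "\<forall>x\<in>C. \<forall>y\<in>C. x \<noteq> y \<longrightarrow> cball x r \<inter> cball y r = {}"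
  shows "(\<Sum>x\<in>C. measure M (cball x r) powr s) \<le> TT K powr \<bar>s\<bar> * Z s (m+K)"
proof -
  define n where "n = m + K"
  define wf where "wf x = (SOME w. length w = n \<and> x \<in> I w)" for x
  have wf: "length (wf x) = n \<and> x \<in> I (wf x)" if "x \<in> X" for x
    unfolding wf_def by (rule someI_ex) (rule X_cover[OF that])
  have r0: "0 < r" using r ell_pos[of "m+K"] by linarith
  have gap: "2 * r < (1 - 2/B) * L (m - 1)" using key_gap[OF K m r0 r(2)] .
  have inj: "inj_on wf C"
  proof (rule inj_onI)
    fix x y assume xy: "x \<in> C" "y \<in> C" "wf x = wf y"
    show "x = y"
    proof (rule ccontr)
      assume ne: "x \<noteq> y"
      have "x \<in> I (wf x)" "y \<in> I (wf x)" "length (wf x) = n" using wf xy C(2) by (metis subsetD)+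
      then have "\<bar>x - y\<bar> \<le> L n" using I_diam by metis
      then have "\<bar>x - y\<bar> \<le> r" using r n_def by simp
      then have "(x+y)/2 \<in> cball x r \<inter> cball y r" using r0 by (auto simp: dist_real_def abs_if field_simps split: if_splits)
      then show False using C(3) xy ne by blast
    qed
  qed
  have bnd: "measure M (cball x r) powr s \<le> TT K powr \<bar>s\<bar> * wt (wf x) powr s" if "x \<in> C" for x
  proof -
    let ?w = "wf x" let ?u = "take m ?w"
    have lw: "length ?w = n" "x \<in> I ?w" using wf C that by auto
    have lo: "wt ?w \<le> measure M (cball x r)" using ball_ge[OF lw(2)] lw r n_def by simp
    have xu: "x \<in> I ?u" using I_append[of ?u "drop m ?w"] lw by auto
    have lu: "length ?u = Suc (m-1)" using lw m n_def by simp
    have hi: "measure M (cball x r) \<le> wt ?u" using ball_le[OF xu lu, of r] gap r0 by linarith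
    have "wt ?u \<le> wt ?w * TT K" using wt_u_le[of "drop m ?w" K ?u] lw n_def by simp
    then show ?thesis using sandwich[of "wt ?w" "TT K" "measure M (cball x r)" s] lo hi TT_ge1[of K] wt_pos[of ?w]
      by (smt (verit) measure_nonneg mult_le_cancel_left1)
  qed
  have "(\<Sum>x\<in>C. measure M (cball x r) powr s) \<le> (\<Sum>x\<in>C. TT K powr \<bar>s\<bar> * wt (wf x) powr s)"
    by (rule sum_mono) (rule bnd)
  also have "\<dots> = TT K powr \<bar>s\<bar> * (\<Sum>w\<in>wf ` C. wt w powr s)"
    by (simp add: sum_distrib_left sum.reindex[OF inj])
  also have "\<dots> \<le> TT K powr \<bar>s\<bar> * Z s (m+K)"
  proof (intro mult_left_mono)
    have "wf ` C \<subseteq> {w. length w = n}" using wf C(2) by auto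
    then show "(\<Sum>w\<in>wf ` C. wt w powr s) \<le> Z s (m+K)"
      unfolding Z_def n_def[symmetric] by (intro sum_mono2 finite_words) auto
  qed simp
  finally show ?thesis .
qed

lemma family_sum_ge:
  assumes K: "2 / (1 - 2/B) \<le> B ^ K" and m: "1 \<le> m" and r: "L (m+K) \<le> r" "r < L (m+K-1)"
  shows "\<exists>C. finite C \<and> C \<subseteq> X \<and> (\<forall>x\<in>C. \<forall>y\<in>C. x \<noteq> y \<longrightarrow> cball x r \<inter> cball y r = {})
     \<and> TT K powr (-\<bar>s\<bar>) * Z s m \<le> (\<Sum>x\<in>C. measure M (cball x r) powr s)"
proof -
  have r0: "0 < r" using r ell_pos[of "m+K"] by linarith
  have gap: "2 * r < (1 - 2/B) * L (m - 1)" using key_gap[OF K m r0 r(2)] .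
  let ?W = "{u::bool list. length u = m}"
  have far: "2 * r < \<bar>xl u - xl v\<bar>" if "u \<in> ?W" "v \<in> ?W" "u \<noteq> v" for u v
    using sep[of u "m-1" v "xl u" "xl v"] that m xl_in_I[of u] xl_in_I[of v] gap by simp
  have inj: "inj_on (\<lambda>u. xl u) ?W"
    by (rule inj_onI) (use far r0 in force)
  let ?C = "(\<lambda>u. xl u) ` ?W"
  have disj: "\<forall>x\<in>?C. \<forall>y\<in>?C. x \<noteq> y \<longrightarrow> cball x r \<inter> cball y r = {}"
  proof (intro ballI impI)
    fix x y assume xy: "x \<in> ?C" "y \<in> ?C" "x \<noteq> y"
    then obtain u v where uv: "u \<in> ?W" "v \<in> ?W" "x = xl u" "y = xl v" by blast
    then have "u \<noteq> v" using xy by auto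
    then have "2 * r < \<bar>x - y\<bar>" using far uv by blast
    then show "cball x r \<inter> cball y r = {}"
      by (auto simp: dist_real_def abs_if split: if_splits)
  qed
  have bnd: "TT K powr (-\<bar>s\<bar>) * wt u powr s \<le> measure M (cball (xl u) r) powr s" if "u \<in> ?W" for u
  proof -
    let ?w = "u @ replicate K False"
    have lu: "length u = Suc (m-1)" using that m by simp
    have hi: "measure M (cball (xl u) r) \<le> wt u" using ball_le[OF xl_in_I lu, of r] gap r0 by linarith
    have "xl u \<in> I ?w" using xl_in_I[of ?w] by (simp only: xl_rep)
    then have lo: "wt ?w \<le> measure M (cball (xl u) r)" using ball_ge[of "xl u" ?w r] that r by simp
    have "wt u \<le> wt ?w * TT K" using wt_u_le[of "replicate K False" K u] by simp
    then show ?thesis using sandwich[of "wt u" "TT K" "measure M (cball (xl u) r)" s] lo hi TT_ge1[of K] wt_pos[of u]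
      by (smt (verit) mult_right_mono mult_le_cancel_left1)
  qed
  have "TT K powr (-\<bar>s\<bar>) * Z s m = (\<Sum>u\<in>?W. TT K powr (-\<bar>s\<bar>) * wt u powr s)"
    by (simp add: Z_def sum_distrib_left)
  also have "\<dots> \<le> (\<Sum>u\<in>?W. measure M (cball (xl u) r) powr s)"
    by (rule sum_mono) (rule bnd)
  also have "\<dots> = (\<Sum>x\<in>?C. measure M (cball x r) powr s)"
    by (simp add: sum.reindex[OF inj])
  finally show ?thesis using disj xl_in_X finite_words by (intro exI[of _ ?C]) auto
qed

lemma S_bounds:
  assumes K: "2 / (1 - 2/B) \<le> B ^ K" and m: "1 \<le> m" and r: "L (m+K) \<le> r" "r < L (m+K-1)"
  shows "TT K powr (-\<bar>s\<bar>) * Z s m \<le> Sr M X s r \<and> Sr M X s r \<le> TT K powr \<bar>s\<bar> * Z s (m+K)"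
proof -
  let ?Q = "{(\<Sum>x\<in>C. measure M (cball x r) powr s) | C.
       finite C \<and> C \<subseteq> X \<and> (\<forall>x\<in>C. \<forall>y\<in>C. x \<noteq> y \<longrightarrow> cball x r \<inter> cball y r = {})}"
  have ub: "q \<le> TT K powr \<bar>s\<bar> * Z s (m+K)" if qQ: "q \<in> ?Q" for q
  proof -
    obtain C where "q = (\<Sum>x\<in>C. measure M (cball x r) powr s)" "finite C" "C \<subseteq> X"
       "\<forall>x\<in>C. \<forall>y\<in>C. x \<noteq> y \<longrightarrow> cball x r \<inter> cball y r = {}"
      using qQ by auto
    then show ?thesis using admissible_sum_le[OF K m r, of C] by simp
  qed
  have "(\<Sum>x\<in>{}. measure M (cball x r) powr s) \<in> ?Q" by (intro CollectI exI[of _ "{}"]) simp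
  then have ne: "?Q \<noteq> {}" by blast
  have up: "Sr M X s r \<le> TT K powr \<bar>s\<bar> * Z s (m+K)"
    unfolding Sr_def by (rule cSup_least[OF ne ub])
  have bdd: "bdd_above ?Q" by (rule bdd_aboveI[OF ub])
  obtain C where C: "finite C" "C \<subseteq> X" "\<forall>x\<in>C. \<forall>y\<in>C. x \<noteq> y \<longrightarrow> cball x r \<inter> cball y r = {}"
     "TT K powr (-\<bar>s\<bar>) * Z s m \<le> (\<Sum>x\<in>C. measure M (cball x r) powr s)"
    using family_sum_ge[OF K m r, of s] by auto
  have "TT K powr (-\<bar>s\<bar>) * Z s m \<le> Sr M X s r"
    unfolding Sr_def by (rule cSup_upper2[OF _ C(4) bdd]) (use C in \<open>intro CollectI exI[of _ C], simp\<close>)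
  then show ?thesis using up by simp
qed

end

locale moranS = moranM + fixes s :: real and K :: nat
  assumes K: "2 / (1 - 2/B) \<le> B ^ K"
begin

definition "bk k = (if typeA N k then beta A p s else beta B q s)"
definition "Pn n = (\<Sum>k\<in>{1..n}. bk k * ln (R k))"
definition "Tn n = (\<Sum>k\<in>{1..n}. ln (R k))"
definition "GG = \<bar>ln (p powr s + (1-p) powr s)\<bar> + \<bar>ln (q powr s + (1-q) powr s)\<bar>"
definition "c0 = \<bar>s\<bar> * ln (TT K) + real K * GG"
definition "lo = min (beta A p s) (beta B q s)"
definition "hi = max (beta A p s) (beta B q s)"

lemma lnA: "0 < ln A" using B2 BA by simp
lemma lnB: "0 < ln B" using B2 by simp
lemma lnR: "ln B \<le> ln (R k)" "ln (R k) \<le> ln A"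
  using rr_ge[of k] rr_le[of k] B2 by auto

lemma lnfk: "ln (fk s k) = - bk k * ln (R k)"
  using lnA lnB unfolding fk_def rho_def rr_def bk_def beta_def by auto

lemma lnfk_le: "\<bar>ln (fk s k)\<bar> \<le> GG"
  unfolding fk_def rho_def GG_def by auto

lemma lnZ: "ln (Z s n) = - Pn n"
  by (simp add: ln_Z lnfk Pn_def sum_negf)

lemma lnL: "ln (L n) = - Tn n"
  by (simp add: ln_ell Tn_def)

lemma Tn_ge: "real n * ln B \<le> Tn n"
proof -
  have "(\<Sum>k\<in>{1..n}. ln B) \<le> Tn n" unfolding Tn_def by (rule sum_mono) (rule lnR)
  then show ?thesis by simp
qed

lemma Tn_Suc: "Tn (Suc n) = Tn n + ln (R (Suc n))"
  by (simp add: Tn_def sum.cl_ivl_Suc)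

lemma bk_bounds: "lo \<le> bk k" "bk k \<le> hi"
  by (auto simp: lo_def hi_def bk_def)

lemma Pn_bounds: "lo * Tn n \<le> Pn n" "Pn n \<le> hi * Tn n"
proof -
  have "(\<Sum>k\<in>{1..n}. lo * ln (R k)) \<le> Pn n"
    unfolding Pn_def using lnR lnB bk_bounds
    by (intro sum_mono mult_right_mono) (auto intro: order_trans[OF less_imp_le[OF lnB]])
  then show "lo * Tn n \<le> Pn n" by (simp add: Tn_def sum_distrib_left)
  have "Pn n \<le> (\<Sum>k\<in>{1..n}. hi * ln (R k))"
    unfolding Pn_def using lnR lnB bk_bounds
    by (intro sum_mono mult_right_mono) (auto intro: order_trans[OF less_imp_le[OF lnB]])
  then show "Pn n \<le> hi * Tn n" by (simp add: Tn_def sum_distrib_left)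
qed

lemma lnZ_diff: "\<bar>ln (Z s (m + j)) - ln (Z s m)\<bar> \<le> real j * GG"
proof (induction j)
  case 0 then show ?case by simp
next
  case (Suc j)
  have "ln (Z s (m + Suc j)) = ln (Z s (m + j)) + ln (fk s (Suc (m + j)))"
    using Z_pos[of s "m+j"] fk_pos[of s "Suc (m+j)"] by (simp add: Z_Suc ln_mult)
  then show ?case using Suc lnfk_le[of "Suc (m+j)"] by (simp add: algebra_simps)
qed

lemma TT_pos: "0 < TT K" using TT_ge1[of K] by simp

lemma lnS:
  assumes m: "1 \<le> m" and r: "L (m+K) \<le> r" "r < L (m+K-1)"
  shows "\<bar>ln (Sr M X s r) - ln (Z s (m+K))\<bar> \<le> c0"
proof -
  note SB = S_bounds[OF K m r, of s]
  have p1: "0 < TT K powr (-\<bar>s\<bar>) * Z s m" using TT_pos Z_pos[of s m] by simp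
  have S0: "0 < Sr M X s r" using SB p1 by linarith
  have "ln (TT K powr (-\<bar>s\<bar>) * Z s m) \<le> ln (Sr M X s r)" using SB p1 S0 by simp
  then have l1: "- \<bar>s\<bar> * ln (TT K) + ln (Z s m) \<le> ln (Sr M X s r)"
    using TT_pos Z_pos[of s m] by (simp add: ln_mult ln_powr)
  have p2: "0 < TT K powr \<bar>s\<bar> * Z s (m+K)" using TT_pos Z_pos[of s "m+K"] by simp
  have "ln (Sr M X s r) \<le> ln (TT K powr \<bar>s\<bar> * Z s (m+K))" using SB p2 S0 by simp
  then have l2: "ln (Sr M X s r) \<le> \<bar>s\<bar> * ln (TT K) + ln (Z s (m+K))"
    using TT_pos Z_pos[of s "m+K"] by (simp add: ln_mult ln_powr)
  have d: "\<bar>ln (Z s (m + K)) - ln (Z s m)\<bar> \<le> real K * GG" by (rule lnZ_diff)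
  have "0 \<le> ln (TT K)" using TT_ge1[of K] by simp
  then have "0 \<le> \<bar>s\<bar> * ln (TT K)" by simp
  have "0 \<le> GG" by (simp add: GG_def)
  show ?thesis using l1 l2 d \<open>0 \<le> \<bar>s\<bar> * ln (TT K)\<close> \<open>0 \<le> GG\<close> unfolding c0_def by linarith
qed

definition "f r = ln (Sr M X s r) / ln r"
definition "c1 = c0 + (\<bar>lo\<bar> + \<bar>hi\<bar>) * ln A"

lemma level_exists:
  assumes "0 < r" "r < L K"
  shows "\<exists>n. K + 1 \<le> n \<and> L n \<le> r \<and> r < L (n - 1)"
proof -
  obtain j where j: "1 / r < B ^ j" using real_arch_pow[of B "1/r"] B2 by auto
  have "L j \<le> 1 / B ^ j" using ell_add[of 0 j] by simp
  also have "\<dots> < r" using j assms(1) B2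
    by (simp add: divide_less_eq mult.commute)
  finally have ex: "\<exists>j. L j \<le> r" by (blast intro: less_imp_le)
  define n where "n = (LEAST j. L j \<le> r)"
  have n1: "L n \<le> r" unfolding n_def using LeastI_ex[OF ex] .
  have n2: "K + 1 \<le> n"
  proof (rule ccontr)
    assume "\<not> K + 1 \<le> n"
    then have "L K \<le> L n" by (intro ell_mono) simp
    then show False using n1 assms by linarith
  qed
  have "\<not> L (n - 1) \<le> r" unfolding n_def
    by (rule not_less_Least) (use n2 n_def in auto)
  then show ?thesis using n1 n2 by (intro exI[of _ n]) auto
qed

lemma LK_le1: "L K \<le> 1" using ell_mono[of 0 K] by simp

lemma f_bounds:
  assumes r: "0 < r" "r < L K"
  shows "lo - c1 / (- ln r) \<le> f r \<and> f r \<le> hi + c1 / (- ln r)"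
proof -
  obtain n where n: "K + 1 \<le> n" "L n \<le> r" "r < L (n - 1)" using level_exists[OF r] by blast
  define m where "m = n - K"
  have m: "1 \<le> m" "n = m + K" using n m_def by auto
  have e1: "\<bar>ln (Sr M X s r) + Pn n\<bar> \<le> c0" using lnS[OF m(1)] n m lnZ[of n] by simp
  have lr1: "- Tn n \<le> ln r" using n(2) ell_pos[of n] r lnL[of n] by (metis ln_le_cancel_iff)
  obtain n' where n': "n = Suc n'" using n by (cases n) auto
  have "ln r < ln (L n')" using n(3) n' r by simp
  then have lr2: "ln r < - Tn n + ln A" using lnL[of n'] Tn_Suc[of n'] n' lnR(2)[of n] by simp
  have lr0: "ln r < 0" using r LK_le1 by simp
  define D where "D = - ln r"
  have D0: "0 < D" using lr0 D_def by simp
  have fr: "f r = (Pn n - (ln (Sr M X s r) + Pn n)) / D"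
  proof -
    have "ln r = - D" by (simp add: D_def)
    then have "f r = ln (Sr M X s r) / (- D)" by (simp add: f_def)
    also have "\<dots> = (Pn n - (ln (Sr M X s r) + Pn n)) / D" by simp
    finally show ?thesis .
  qed
  have e2: "0 \<le> Tn n - D" "Tn n - D < ln A" using lr1 lr2 D_def by auto
  have "0 \<le> \<bar>hi\<bar> * ln A" "0 \<le> \<bar>lo\<bar> * ln A" using lnA by auto
  have distr: "(\<bar>lo\<bar> + \<bar>hi\<bar>) * ln A = \<bar>lo\<bar> * ln A + \<bar>hi\<bar> * ln A" by (simp add: distrib_right)
  have "lo * Tn n = lo * D + lo * (Tn n - D)" by (simp add: algebra_simps)
  moreover have "- \<bar>lo\<bar> * ln A \<le> lo * (Tn n - D)"
  proof -
    have "\<bar>lo * (Tn n - D)\<bar> \<le> \<bar>lo\<bar> * ln A" using e2 by (simp add: abs_mult mult_left_mono)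
    then show ?thesis by linarith
  qed
  ultimately have a1: "lo * D - c1 \<le> Pn n - (ln (Sr M X s r) + Pn n)"
    using Pn_bounds(1)[of n] e1 unfolding c1_def using \<open>0 \<le> \<bar>hi\<bar> * ln A\<close> distr by linarith
  have "hi * Tn n = hi * D + hi * (Tn n - D)" by (simp add: algebra_simps)
  moreover have "hi * (Tn n - D) \<le> \<bar>hi\<bar> * ln A"
  proof -
    have "\<bar>hi * (Tn n - D)\<bar> \<le> \<bar>hi\<bar> * ln A" using e2 by (simp add: abs_mult mult_left_mono)
    then show ?thesis by linarith
  qed
  ultimately have a2: "Pn n - (ln (Sr M X s r) + Pn n) \<le> hi * D + c1"
    using Pn_bounds(2)[of n] e1 unfolding c1_def using \<open>0 \<le> \<bar>lo\<bar> * ln A\<close> distr by linarith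
  have "lo - c1 / D = (lo * D - c1) / D" using D0 by (simp add: field_simps)
  also have "\<dots> \<le> f r" unfolding fr using a1 D0 by (intro divide_right_mono) auto
  finally have b1: "lo - c1 / D \<le> f r" .
  have "f r \<le> (hi * D + c1) / D" unfolding fr using a2 D0 by (intro divide_right_mono) auto
  also have "\<dots> = hi + c1 / D" using D0 by (simp add: field_simps)
  finally show ?thesis using b1 D_def by simp
qed

lemma f_at_L:
  assumes n: "K + 1 \<le> n"
  shows "\<bar>f (L n) - Pn n / Tn n\<bar> \<le> c0 / Tn n"
proof -
  define m where "m = n - K"
  have m: "1 \<le> m" "n = m + K" using n m_def by auto
  obtain n' where n': "n = Suc n'" using n by (cases n) auto
  have lt: "L n < L (n - 1)"
    using ell_Suc[of n'] ell_pos[of n'] rr_ge[of n] B2 n'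
    by (simp add: divide_less_eq)
  have e1: "\<bar>ln (Sr M X s (L n)) + Pn n\<bar> \<le> c0" using lnS[OF m(1), of "L n"] m lt lnZ[of n] by simp
  have T0: "0 < Tn n" using Tn_ge[of n] lnB n
  proof -
    have "0 < real n * ln B" using lnB n by simp
    then show ?thesis using Tn_ge[of n] by linarith
  qed
  have "f (L n) - Pn n / Tn n = - (ln (Sr M X s (L n)) + Pn n) / Tn n"
    unfolding f_def lnL using T0 by (simp add: field_simps)
  then have "\<bar>f (L n) - Pn n / Tn n\<bar> = \<bar>ln (Sr M X s (L n)) + Pn n\<bar> / Tn n" using T0 by simp
  then show ?thesis using e1 T0 by (simp add: divide_right_mono)
qed

lemma c0_nonneg: "0 \<le> c0"
proof -
  have "0 \<le> ln (TT K)" using TT_ge1[of K] by simp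
  moreover have "0 \<le> GG" by (simp add: GG_def)
  ultimately show ?thesis unfolding c0_def by simp
qed

lemma Pn_dev:
  fixes P :: "nat \<Rightarrow> bool" and \<beta> \<gamma> :: real
  assumes "\<And>k. P k \<Longrightarrow> bk k = \<beta>" "\<And>k. \<not> P k \<Longrightarrow> bk k = \<gamma>"
  shows "\<bar>Pn n - \<beta> * Tn n\<bar> \<le> \<bar>\<gamma> - \<beta>\<bar> * ln A * card {k\<in>{1..n}. \<not> P k}"
proof -
  have "Pn n - \<beta> * Tn n = (\<Sum>k\<in>{1..n}. (bk k - \<beta>) * ln (R k))"
    by (simp add: Pn_def Tn_def sum_distrib_left sum_subtractf left_diff_distrib)
  also have "\<bar>\<dots>\<bar> \<le> (\<Sum>k\<in>{1..n}. \<bar>(bk k - \<beta>) * ln (R k)\<bar>)" by (rule sum_abs)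
  also have "\<dots> \<le> (\<Sum>k\<in>{1..n}. if \<not> P k then \<bar>\<gamma> - \<beta>\<bar> * ln A else 0)"
  proof (rule sum_mono)
    fix k
    have "0 \<le> ln (R k)" using lnR(1)[of k] lnB by linarith
    then show "\<bar>(bk k - \<beta>) * ln (R k)\<bar> \<le> (if \<not> P k then \<bar>\<gamma> - \<beta>\<bar> * ln A else 0)"
      using assms lnR(2)[of k] by (auto simp: abs_mult intro: mult_left_mono)
  qed
  also have "\<dots> = (\<Sum>k\<in>{k\<in>{1..n}. \<not> P k}. \<bar>\<gamma> - \<beta>\<bar> * ln A)"
    by (subst sum.inter_filter) auto
  also have "\<dots> = \<bar>\<gamma> - \<beta>\<bar> * ln A * card {k\<in>{1..n}. \<not> P k}" by simp
  finally show ?thesis .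
qed

end

locale moranN = moranS +
  assumes SMN: "strict_mono N" and N0: "N 0 = 0"
    and rat: "filterlim (\<lambda>i. real (N (Suc i)) / real (N i)) at_top sequentially"
begin

lemma cnt1: "card {k\<in>{1..N (2*i+1)}. \<not> typeA N k} \<le> N (2*i)"
proof -
  have "{k\<in>{1..N (2*i+1)}. \<not> typeA N k} \<subseteq> {1..N (2*i)}"
  proof
    fix k assume k: "k \<in> {k\<in>{1..N (2*i+1)}. \<not> typeA N k}"
    show "k \<in> {1..N (2*i)}"
    proof (rule ccontr)
      assume "k \<notin> {1..N (2*i)}"
      then have "N (2*i) < k" using k by auto
      then have "typeA N k" using k unfolding typeA_def by auto
      then show False using k by auto
    qed
  qed
  then have "card {k\<in>{1..N (2*i+1)}. \<not> typeA N k} \<le> card {1..N (2*i)}"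
    by (intro card_mono) auto
  then show ?thesis by simp
qed

lemma cnt2: "card {k\<in>{1..N (2*i+2)}. typeA N k} \<le> N (2*i+1)"
proof -
  have "{k\<in>{1..N (2*i+2)}. typeA N k} \<subseteq> {1..N (2*i+1)}"
  proof
    fix k assume k: "k \<in> {k\<in>{1..N (2*i+2)}. typeA N k}"
    then obtain j where j: "N (2*j) < k" "k \<le> N (2*j+1)" unfolding typeA_def by auto
    have "j \<le> i"
    proof (rule ccontr)
      assume "\<not> j \<le> i"
      then have "2*i+2 \<le> 2*j" by simp
      then have "N (2*i+2) \<le> N (2*j)" using SMN by (simp add: strict_mono_less_eq)
      then show False using j k by auto
    qed
    then have "N (2*j+1) \<le> N (2*i+1)" using SMN by (simp add: strict_mono_less_eq)
    then show "k \<in> {1..N (2*i+1)}" using j k by auto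
  qed
  then have "card {k\<in>{1..N (2*i+2)}. typeA N k} \<le> card {1..N (2*i+1)}"
    by (intro card_mono) auto
  then show ?thesis by simp
qed

lemma ratio0:
  assumes h: "filterlim h at_top sequentially"
  shows "(\<lambda>i. real (N (h i)) / real (N (Suc (h i)))) \<longlonglongrightarrow> 0"
proof -
  have "filterlim (\<lambda>i. real (N (Suc (h i))) / real (N (h i))) at_top sequentially"
    by (rule filterlim_compose[OF rat h])
  then have "(\<lambda>i. inverse (real (N (Suc (h i))) / real (N (h i)))) \<longlonglongrightarrow> 0"
    by (rule tendsto_inverse_0_at_top)
  then show ?thesis by (simp add: inverse_divide)
qed

lemma conv:
  assumes h: "filterlim h at_top sequentially"
    and bd: "\<And>i. \<bar>Pn (h i) - \<beta> * Tn (h i)\<bar> \<le> Dc * g i"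
    and g0: "\<And>i. 0 \<le> g i" and Dc: "0 \<le> Dc"
    and gr: "(\<lambda>i. g i / real (h i)) \<longlonglongrightarrow> 0"
  shows "(\<lambda>i. f (L (h i))) \<longlonglongrightarrow> \<beta>"
proof -
  have ev: "eventually (\<lambda>i. K + 1 \<le> h i) sequentially"
    using h unfolding filterlim_at_top by blast
  have bound: "eventually (\<lambda>i. norm (f (L (h i)) - \<beta>) \<le>
      (c0 / ln B) * inverse (real (h i)) + (Dc / ln B) * (g i / real (h i))) sequentially"
    using ev
  proof eventually_elim
    case (elim i)
    define n where "n = h i"
    have n: "K + 1 \<le> n" using elim n_def by simp
    have n0: "0 < real n * ln B" using n lnB by simp
    have T: "real n * ln B \<le> Tn n" by (rule Tn_ge)
    then have T0: "0 < Tn n" using n0 by linarith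
    have a: "\<bar>f (L n) - Pn n / Tn n\<bar> \<le> c0 / Tn n" by (rule f_at_L[OF n])
    have "\<bar>Pn n / Tn n - \<beta>\<bar> = \<bar>Pn n - \<beta> * Tn n\<bar> / Tn n"
      using T0 by (simp add: field_simps)
    also have "\<dots> \<le> Dc * g i / Tn n" using bd[of i] T0 n_def by (simp add: divide_right_mono)
    finally have b: "\<bar>Pn n / Tn n - \<beta>\<bar> \<le> Dc * g i / Tn n" .
    have "\<bar>f (L n) - \<beta>\<bar> \<le> c0 / Tn n + Dc * g i / Tn n" using a b by linarith
    also have "\<dots> = (c0 + Dc * g i) / Tn n" by (simp add: add_divide_distrib)
    also have "\<dots> \<le> (c0 + Dc * g i) / (real n * ln B)"
      using n0 T c0_nonneg Dc g0[of i] by (intro divide_left_mono) auto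
    also have "\<dots> = (c0 / ln B) * inverse (real n) + (Dc / ln B) * (g i / real n)"
      using n0 by (simp add: field_simps add_divide_distrib)
    finally show ?case using n_def by simp
  qed
  have hr: "filterlim (\<lambda>i. real (h i)) at_top sequentially"
    by (rule filterlim_compose[OF filterlim_real_sequentially h])
  have l1: "(\<lambda>i. inverse (real (h i))) \<longlonglongrightarrow> 0" by (rule tendsto_inverse_0_at_top[OF hr])
  have "(\<lambda>i. (c0 / ln B) * inverse (real (h i)) + (Dc / ln B) * (g i / real (h i))) \<longlonglongrightarrow>
        (c0 / ln B) * 0 + (Dc / ln B) * 0"
    by (intro tendsto_intros l1 gr)
  then have "(\<lambda>i. (c0 / ln B) * inverse (real (h i)) + (Dc / ln B) * (g i / real (h i))) \<longlonglongrightarrow> 0"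
    by simp
  from Lim_null_comparison[OF bound this] show ?thesis by (rule LIM_zero_cancel)
qed

lemma seq_top: "strict_mono h \<Longrightarrow> filterlim (\<lambda>i. N (h i)) at_top sequentially"
  using filterlim_subseq[of "N \<circ> h"] SMN by (simp add: strict_mono_def o_def)

lemma conv1: "(\<lambda>i. f (L (N (2*i+1)))) \<longlonglongrightarrow> beta A p s"
proof (rule conv[where g = "\<lambda>i. real (N (2*i))" and Dc = "\<bar>beta B q s - beta A p s\<bar> * ln A"])
  show "filterlim (\<lambda>i. N (2*i+1)) at_top sequentially"
    by (rule seq_top) (auto simp: strict_mono_def)
  fix i
  have "\<bar>Pn (N (2*i+1)) - beta A p s * Tn (N (2*i+1))\<bar>
     \<le> \<bar>beta B q s - beta A p s\<bar> * ln A * card {k\<in>{1..N (2*i+1)}. \<not> typeA N k}"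
    by (rule Pn_dev) (auto simp: bk_def)
  also have "\<dots> \<le> \<bar>beta B q s - beta A p s\<bar> * ln A * real (N (2*i))"
    using cnt1[of i] lnA by (intro mult_left_mono) auto
  finally show "\<bar>Pn (N (2*i+1)) - beta A p s * Tn (N (2*i+1))\<bar> \<le> \<bar>beta B q s - beta A p s\<bar> * ln A * real (N (2*i))" .
next
  show "0 \<le> \<bar>beta B q s - beta A p s\<bar> * ln A" using lnA by simp
next
  have "filterlim (\<lambda>i. 2*i :: nat) at_top sequentially" by (rule mult_nat_left_at_top) simp
  from ratio0[OF this] show "(\<lambda>i. real (N (2*i)) / real (N (2*i+1))) \<longlonglongrightarrow> 0" by simp
qed simp

lemma conv2: "(\<lambda>i. f (L (N (2*i+2)))) \<longlonglongrightarrow> beta B q s"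
proof (rule conv[where g = "\<lambda>i. real (N (2*i+1))" and Dc = "\<bar>beta A p s - beta B q s\<bar> * ln A"])
  show "filterlim (\<lambda>i. N (2*i+2)) at_top sequentially"
    by (rule seq_top) (auto simp: strict_mono_def)
  fix i
  have "\<bar>Pn (N (2*i+2)) - beta B q s * Tn (N (2*i+2))\<bar>
     \<le> \<bar>beta A p s - beta B q s\<bar> * ln A * card {k\<in>{1..N (2*i+2)}. \<not> \<not> typeA N k}"
    by (rule Pn_dev) (auto simp: bk_def)
  also have "\<dots> \<le> \<bar>beta A p s - beta B q s\<bar> * ln A * real (N (2*i+1))"
    using cnt2[of i] lnA by (intro mult_left_mono) auto
  finally show "\<bar>Pn (N (2*i+2)) - beta B q s * Tn (N (2*i+2))\<bar> \<le> \<bar>beta A p s - beta B q s\<bar> * ln A * real (N (2*i+1))" .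
next
  show "0 \<le> \<bar>beta A p s - beta B q s\<bar> * ln A" using lnA by simp
next
  have "filterlim (\<lambda>i. 2*i+1 :: nat) at_top sequentially"
    by (rule filterlim_subseq) (auto simp: strict_mono_def)
  from ratio0[OF this] show "(\<lambda>i. real (N (2*i+1)) / real (N (2*i+2))) \<longlonglongrightarrow> 0" by simp
qed simp

lemma L_to_0: "L \<longlonglongrightarrow> 0"
proof (rule Lim_null_comparison)
  show "\<forall>\<^sub>F n in sequentially. norm (L n) \<le> (1/B) ^ n"
  proof (rule always_eventually, rule allI)
    fix n show "norm (L n) \<le> (1/B) ^ n" using ell_add[of 0 n] ell_pos[of n] by (simp add: power_one_over)
  qed
  show "(\<lambda>n. (1/B) ^ n) \<longlonglongrightarrow> 0" using B2 by (intro LIMSEQ_power_zero) auto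
qed

lemma L_seq_right:
  assumes h: "filterlim h at_top sequentially"
  shows "filterlim (\<lambda>i. L (h i)) (at_right 0) sequentially"
  unfolding filterlim_at
proof
  show "\<forall>\<^sub>F i in sequentially. L (h i) \<in> {0<..} \<and> L (h i) \<noteq> 0"
    using ell_pos by (intro always_eventually) (metis greaterThan_iff less_irrefl)
  show "(\<lambda>i. L (h i)) \<longlonglongrightarrow> 0" by (rule filterlim_compose[OF L_to_0 h])
qed

lemma ev_small:
  assumes "0 < e" shows "\<forall>\<^sub>F r in at_right 0. c1 / (- ln r) < e"
proof -
  have "filterlim (\<lambda>r. - ln r) at_top (at_right (0::real))"
    using ln_at_0 by (simp add: filterlim_uminus_at_bot[symmetric])
  then have "((\<lambda>r. c1 / (- ln r)) \<longlongrightarrow> 0) (at_right (0::real))"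
    by (intro tendsto_divide_0[OF tendsto_const] filterlim_at_top_imp_at_infinity)
  then show ?thesis using assms by (rule order_tendstoD(2))
qed

lemma ev_range: "\<forall>\<^sub>F r in at_right 0. 0 < r \<and> r < L K"
  using ell_pos[of K] by (auto simp: eventually_at_right_field intro!: exI[of _ "L K"])

lemma Liminf_ge: "ereal lo \<le> Liminf (at_right 0) (\<lambda>r. ereal (f r))"
proof (subst le_Liminf_iff, intro allI impI)
  fix y assume y: "y < ereal lo"
  show "\<forall>\<^sub>F r in at_right 0. y < ereal (f r)"
  proof (cases y)
    case (real y')
    then have "0 < lo - y'" using y by simp
    from eventually_conj[OF ev_small[OF this] ev_range]
    show ?thesis
    proof (rule eventually_mono)
      fix r assume r: "c1 / (- ln r) < lo - y' \<and> 0 < r \<and> r < L K"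
      then have "lo - c1 / (- ln r) \<le> f r" using f_bounds by blast
      then show "y < ereal (f r)" using r real by simp
    qed
  qed (use y in auto)
qed

lemma Limsup_le: "Limsup (at_right 0) (\<lambda>r. ereal (f r)) \<le> ereal hi"
proof (subst Limsup_le_iff, intro allI impI)
  fix y assume y: "ereal hi < y"
  show "\<forall>\<^sub>F r in at_right 0. ereal (f r) < y"
  proof (cases y)
    case (real y')
    then have "0 < y' - hi" using y by simp
    from eventually_conj[OF ev_small[OF this] ev_range]
    show ?thesis
    proof (rule eventually_mono)
      fix r assume r: "c1 / (- ln r) < y' - hi \<and> 0 < r \<and> r < L K"
      then have "f r \<le> hi + c1 / (- ln r)" using f_bounds by blast
      then show "ereal (f r) < y" using r real by simp
    qed
  qed (use y in auto)
qed


lemma Liminf_le_seq: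
  fixes Fn :: "real \<Rightarrow> ereal"
  assumes g: "filterlim g G sequentially" and l: "((\<lambda>i. Fn (g i)) \<longlongrightarrow> l) sequentially"
  shows "Liminf G Fn \<le> l"
proof (rule ccontr)
  assume "\<not> Liminf G Fn \<le> l"
  then have "l < Liminf G Fn" by simp
  then obtain y where y: "l < y" "y < Liminf G Fn" using dense by blast
  have ev: "\<forall>\<^sub>F x in G. y < Fn x" using less_LiminfD[OF y(2)] .
  have e1: "\<forall>\<^sub>F i in sequentially. y < Fn (g i)"
    using g[unfolded filterlim_iff, rule_format, OF ev] by simp
  have e2: "\<forall>\<^sub>F i in sequentially. Fn (g i) < y" using order_tendstoD(2)[OF l y(1)] .
  have "\<forall>\<^sub>F i in sequentially. False" using eventually_conj[OF e1 e2] by (rule eventually_mono) auto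
  then show False by simp
qed

lemma Limsup_ge_seq:
  fixes Fn :: "real \<Rightarrow> ereal"
  assumes g: "filterlim g G sequentially" and l: "((\<lambda>i. Fn (g i)) \<longlongrightarrow> l) sequentially"
  shows "l \<le> Limsup G Fn"
proof (rule ccontr)
  assume "\<not> l \<le> Limsup G Fn"
  then have "Limsup G Fn < l" by simp
  then obtain y where y: "Limsup G Fn < y" "y < l" using dense by blast
  have ev: "\<forall>\<^sub>F x in G. Fn x < y" using Limsup_lessD[OF y(1)] .
  have e1: "\<forall>\<^sub>F i in sequentially. Fn (g i) < y"
    using g[unfolded filterlim_iff, rule_format, OF ev] by simp
  have e2: "\<forall>\<^sub>F i in sequentially. y < Fn (g i)" using order_tendstoD(1)[OF l y(2)] .
  have "\<forall>\<^sub>F i in sequentially. False" using eventually_conj[OF e1 e2] by (rule eventually_mono) auto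
  then show False by simp
qed

lemma main_moran:
  "Liminf (at_right 0) (\<lambda>r. ereal (f r)) = ereal lo \<and> Limsup (at_right 0) (\<lambda>r. ereal (f r)) = ereal hi"
proof -
  have h1: "filterlim (\<lambda>i. N (2*i+1)) at_top sequentially"
    by (rule seq_top) (auto simp: strict_mono_def)
  have h2: "filterlim (\<lambda>i. N (2*i+2)) at_top sequentially"
    by (rule seq_top) (auto simp: strict_mono_def)
  have t1: "((\<lambda>i. ereal (f (L (N (2*i+1))))) \<longlongrightarrow> ereal (beta A p s)) sequentially"
    using conv1 by simp
  have t2: "((\<lambda>i. ereal (f (L (N (2*i+2))))) \<longlongrightarrow> ereal (beta B q s)) sequentially"
    using conv2 by simp
  have a1: "Liminf (at_right 0) (\<lambda>r. ereal (f r)) \<le> ereal (beta A p s)"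
    using Liminf_le_seq[OF L_seq_right[OF h1] t1] .
  have a2: "Liminf (at_right 0) (\<lambda>r. ereal (f r)) \<le> ereal (beta B q s)"
    using Liminf_le_seq[OF L_seq_right[OF h2] t2] .
  have b1: "ereal (beta A p s) \<le> Limsup (at_right 0) (\<lambda>r. ereal (f r))"
    using Limsup_ge_seq[OF L_seq_right[OF h1] t1] .
  have b2: "ereal (beta B q s) \<le> Limsup (at_right 0) (\<lambda>r. ereal (f r))"
    using Limsup_ge_seq[OF L_seq_right[OF h2] t2] .
  have "Liminf (at_right 0) (\<lambda>r. ereal (f r)) \<le> ereal lo"
    using a1 a2 unfolding lo_def by (cases "beta A p s \<le> beta B q s") (auto simp: min_def)
  moreover have "ereal hi \<le> Limsup (at_right 0) (\<lambda>r. ereal (f r))"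
    using b1 b2 unfolding hi_def by (cases "beta A p s \<le> beta B q s") (auto simp: max_def)
  ultimately show ?thesis using Liminf_ge Limsup_le by (auto intro: antisym)
qed

end

theorem mainTheorem8:
  fixes A B p q :: real and N :: "nat \<Rightarrow> nat" and M :: "real measure" and s :: real
  assumes "2 < B" and "B < A"
    and "0 < p" and "p \<le> 1/2" and "0 < q" and "q \<le> 1/2"
    and "strict_mono N" and "N 0 = 0"
    and "filterlim (\<lambda>i. real (N (Suc i)) / real (N i)) at_top sequentially"
    and "- ln p / ln A < - ln (1 - q) / ln B"
    and "prob_space M" and "sets M = sets borel"
    and "emeasure M (UNIV - Xset A B N) = 0"
    and "\<And>w. emeasure M (Iw A B N w) = ennreal (weight p q N w)"
  shows "Liminf (at_right 0) (\<lambda>r. ereal (ln (Sr M (Xset A B N) s r) / ln r))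
           = ereal (min (beta A p s) (beta B q s))
         \<and> Limsup (at_right 0) (\<lambda>r. ereal (ln (Sr M (Xset A B N) s r) / ln r))
           = ereal (max (beta A p s) (beta B q s))"
proof -
  obtain K where K: "2 / (1 - 2/B) < B ^ K" using real_arch_pow[of B "2 / (1 - 2/B)"] assms(1) by auto
  have K': "2 / (1 - 2/B) \<le> B ^ K" using K by simp
  interpret moranN A B p q N M s K
    by (intro moranN.intro moranS.intro moranM.intro moran.intro moranS_axioms.intro
          moranM_axioms.intro moranN_axioms.intro) (fact assms K')+
  show ?thesis using main_moran unfolding f_def lo_def hi_def .
qed

end
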